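(* Let $(P,\leqslant)$ be a locally finite poset having a minimum element $\hat{0}$, and suppose $P$ has the Möbius uncertainty property, i.e. whenever $f,g:P\to\mathbb{C}$ are functions, neither identically zero, with $g(z)=\sum_{x\leqslant z} f(x)$ for all $z\in P$, at least one of $\operatorname{supp}(f)=\{x:f(x)\neq0\}$ and $\operatorname{supp}(g)=\{x:g(x)\neq0\}$ is infinite. Then for every subset $S\subset P$ with $1\leqslant |S|\leqslant 2$, there exists $z\in S$ such that there are infinitely many $x\in P$ with $x\geqslant z$ but $x\not\geqslant y$ for every $y\in S\setminus\{z\}$.
   Context: A poset is locally finite if every interval $\{z: x\leqslant z\leqslant y\}$ is finite. *)

theory Defs
  imports Complex_Main
begin

text \<open>The poset is the whole carrier of a type of class order.\<close>

definition locally_finite_poset :: "'a::order itself \<Rightarrow> bool" where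
  "locally_finite_poset _ \<longleftrightarrow> (\<forall>x y::'a. finite {x..y})"

definition supp :: "('a \<Rightarrow> complex) \<Rightarrow> 'a set" where
  "supp f = {x. f x \<noteq> 0}"

definition mobius_uncertainty :: "'a::order itself \<Rightarrow> bool" where
  "mobius_uncertainty _ \<longleftrightarrow>
     (\<forall>(f::'a \<Rightarrow> complex) g. f \<noteq> (\<lambda>_. 0) \<longrightarrow> g \<noteq> (\<lambda>_. 0) \<longrightarrow>
        (\<forall>z. g z = (\<Sum>x\<in>{..z}. f x)) \<longrightarrow>
        infinite (supp f) \<or> infinite (supp g))"

end

theory Submission
  imports Defs
begin

theorem theorem1p4:
  assumes "locally_finite_poset TYPE('a::order)"
    and "\<exists>z0::'a. \<forall>x. z0 \<le> x"
    and "mobius_uncertainty TYPE('a)"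
    and "finite (S :: 'a set)" and "1 \<le> card S" and "card S \<le> 2"
  shows "\<exists>z\<in>S. infinite {x. z \<le> x \<and> (\<forall>y\<in>S - {z}. \<not> y \<le> x)}"
proof -
  obtain z0 :: 'a where z0: "\<forall>x. z0 \<le> x" using assms(2) by blast
  have fin: "finite {..w}" for w :: 'a
  proof -
    have "{..w} = {z0..w}" using z0 by auto
    thus ?thesis using assms(1) unfolding locally_finite_poset_def by simp
  qed
  have MU: "infinite (supp f) \<or> infinite (supp g)"
    if "f \<noteq> (\<lambda>_. 0)" "g \<noteq> (\<lambda>_. 0)" "\<forall>z. g z = (\<Sum>x\<in>{..z}. f x)" for f g :: "'a \<Rightarrow> complex"
    using assms(3) that unfolding mobius_uncertainty_def by blast
  have delta: "(\<Sum>x\<in>{..w}. (if x = a then 1 else 0 :: complex)) = (if a \<le> w then 1 else 0)" for a w :: 'a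
    using fin[of w] by (simp add: sum.delta')
  show ?thesis
  proof (cases "card S = 1")
    case True
    then obtain a where S: "S = {a}" using card_1_singletonE by blast
    show ?thesis
    proof (rule ccontr)
      assume "\<not> ?thesis"
      hence F: "finite {x. a \<le> x}" using S by simp
      define f :: "'a \<Rightarrow> complex" where "f = (\<lambda>x. if x = a then 1 else 0)"
      define g :: "'a \<Rightarrow> complex" where "g = (\<lambda>w. if a \<le> w then 1 else 0)"
      have "f a = 1" unfolding f_def by simp
      hence "f \<noteq> (\<lambda>_. 0)" by (metis one_neq_zero)
      moreover have "g a = 1" unfolding g_def by simp
      hence "g \<noteq> (\<lambda>_. 0)" by (metis one_neq_zero)
      moreover have "\<forall>z. g z = (\<Sum>x\<in>{..z}. f x)" unfolding f_def g_def using delta by simp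
      moreover have "supp f = {a}" unfolding supp_def f_def by auto
      moreover have "supp g = {x. a \<le> x}" unfolding supp_def g_def by auto
      ultimately show False using MU[of f g] F by auto
    qed
  next
    case False
    hence "card S = 2" using assms(5,6) by simp
    then obtain a b where S: "S = {a, b}" and ab: "a \<noteq> b" by (meson card_2_iff)
    show ?thesis
    proof (rule ccontr)
      assume "\<not> ?thesis"
      hence A: "\<forall>z\<in>S. finite {x. z \<le> x \<and> (\<forall>y\<in>S - {z}. \<not> y \<le> x)}" by blast
      have e1: "{x. a \<le> x \<and> (\<forall>y\<in>S - {a}. \<not> y \<le> x)} = {x. a \<le> x \<and> \<not> b \<le> x}"
      proof -
        have "S - {a} = {b}" using S ab by blast
        thus ?thesis by simp
      qed
      have e2: "{x. b \<le> x \<and> (\<forall>y\<in>S - {b}. \<not> y \<le> x)} = {x. b \<le> x \<and> \<not> a \<le> x}"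
      proof -
        have "S - {b} = {a}" using S ab by blast
        thus ?thesis by simp
      qed
      have F1: "finite {x. a \<le> x \<and> \<not> b \<le> x}" 
      proof -
        have "a \<in> S" using S by simp
        hence "finite {x. a \<le> x \<and> (\<forall>y\<in>S - {a}. \<not> y \<le> x)}" by (rule bspec[OF A])
        thus ?thesis by (simp only: e1)
      qed
      have F2: "finite {x. b \<le> x \<and> \<not> a \<le> x}" 
      proof -
        have "b \<in> S" using S by simp
        hence "finite {x. b \<le> x \<and> (\<forall>y\<in>S - {b}. \<not> y \<le> x)}" by (rule bspec[OF A])
        thus ?thesis by (simp only: e2)
      qed
      define f :: "'a \<Rightarrow> complex" where "f = (\<lambda>x. (if x = a then 1 else 0) - (if x = b then 1 else 0))"
      define g :: "'a \<Rightarrow> complex" where "g = (\<lambda>w. (if a \<le> w then 1 else 0) - (if b \<le> w then 1 else 0))"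
      have "f a = 1" unfolding f_def using ab by simp
      hence "f \<noteq> (\<lambda>_. 0)" by (metis one_neq_zero)
      moreover have "g a \<noteq> 0 \<or> g b \<noteq> 0"
      proof (cases "b \<le> a")
        case True
        hence "\<not> a \<le> b" using ab by auto
        thus ?thesis unfolding g_def by simp
      next
        case False
        thus ?thesis unfolding g_def by simp
      qed
      hence "g \<noteq> (\<lambda>_. 0)" by auto
      moreover have "\<forall>z. g z = (\<Sum>x\<in>{..z}. f x)" unfolding f_def g_def
        by (simp add: sum_subtractf delta)
      moreover have "supp f = {a, b}" unfolding supp_def f_def using ab by auto
      moreover have "supp g \<subseteq> {x. a \<le> x \<and> \<not> b \<le> x} \<union> {x. b \<le> x \<and> \<not> a \<le> x}"
        unfolding supp_def g_def by auto
      hence "finite (supp g)" using F1 F2 finite_subset by blast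
      ultimately show False using MU[of f g] by auto
    qed
  qed
qed

end
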